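(* Let $\Lambda_h\subset\mathcal{N}_h^0$ be an arbitrary subset of interior nodes and let $v_h,w_h\in\mathbb{V}_h$ satisfy $$(-\Delta)^s_h[v_h](x_i)\ge(-\Delta)^s_h[w_h](x_i)\quad\forall x_i\in\Lambda_h,\qquad v_h(x_i)\ge w_h(x_i)\quad\forall x_i\in\mathcal{N}_h^0\setminus\Lambda_h.$$ Then $v_h\ge w_h$ in $\Omega$.
   Context: Let $n\ge1$, $s\in(0,1)$, and let $\Omega\subset\mathbb{R}^n$ be a bounded polygonal/polyhedral Lipschitz domain satisfying the exterior ball condition, with a conforming simplicial triangulation $\mathcal{T}_h$. Let $x_1,\dots,x_N$ be the interior nodes (nodes not on $\partial\Omega$), $\mathcal{N}_h^0$ their set, $\delta_i=\mathrm{dist}(x_i,\partial\Omega)$, and $h_i$ the local mesh size at $x_i$. Let $\mathbb{V}_h=\{v\in C(\mathbb{R}^n): v|_T\text{ affine for all }T\in\mathcal{T}_h,\ v=0\text{ on }\Omega^c\}$. For each interior node $x_i$ fix $H_i>0$ (typically $H_i=h_i^{\alpha_i}\delta_i^{1-\alpha_i}$, $\alpha_i\in[0,1]$), a star-shaped domain $\Omega_i\subset\Omega$ centered at $x_i$ containing the points $x_i\pm H_ie_j$ (e.g. the cube $x_i+[-H_i,H_i]^n$) and satisfying the symmetry conditions of Han–Wu–Zhou's monotone discretization, and a constant $\kappa_{n,s,i}>0$. For $v\in\mathbb{V}_h$ define $$(-\Delta)^s_h[v](x_i):=-\kappa_{n,s,i}\frac{\Delta_{FD}v(x_i;H_i)}{H_i^{2s}}+\int_{\Omega_i^c}\frac{v(x_i)-v(y)}{|x_i-y|^{n+2s}}\,dy,\qquad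 \Delta_{FD}v(x_i;H_i)=\sum_{j=1}^n\big(v(x_i+H_ie_j)-2v(x_i)+v(x_i-H_ie_j)\big),$$ where $e_j$ are the coordinate unit vectors. Standing fact (discrete barrier function): the function $b_h\in\mathbb{V}_h$ with $b_h(x_i)=1$ for all interior nodes satisfies $(-\Delta)^s_h[b_h](x_i)\ge C\delta_i^{-2s}>0$ for all $x_i\in\mathcal{N}_h^0$, with $C>0$ depending only on $s$ and $\Omega$. *)

theory Defs
  imports "HOL-Analysis.Analysis"
begin

text \<open>Bounded Lipschitz domain (locally the subgraph of a Lipschitz function
  in some unit direction e).\<close>
definition lipschitz_domain :: "(real^'n) set \<Rightarrow> bool" where
  "lipschitz_domain \<Omega> \<longleftrightarrow> open \<Omega> \<and> connected \<Omega> \<and> bounded \<Omega> \<and> \<Omega> \<noteq> {} \<and>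
     (\<forall>p\<in>frontier \<Omega>. \<exists>e r L (g :: real^'n \<Rightarrow> real).
        norm e = 1 \<and> r > 0 \<and> L-lipschitz_on UNIV g \<and>
        (\<forall>x t. g (x + t *\<^sub>R e) = g x) \<and>
        \<Omega> \<inter> ball p r = {x \<in> ball p r. x \<bullet> e < g x})"

definition exterior_ball_condition :: "(real^'n) set \<Rightarrow> bool" where
  "exterior_ball_condition \<Omega> \<longleftrightarrow>
     (\<exists>r>0. \<forall>p\<in>frontier \<Omega>. \<exists>c. dist p c = r \<and> ball c r \<inter> \<Omega> = {})"

definition conforming_triangulation :: "(real^'n) set set \<Rightarrow> (real^'n) set \<Rightarrow> bool" where
  "conforming_triangulation Th \<Omega> \<longleftrightarrow> finite Th \<and>
     (\<forall>T\<in>Th. (int CARD('n)) simplex T) \<and>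
     (\<Union>Th) = closure \<Omega> \<and>
     (\<forall>T1\<in>Th. \<forall>T2\<in>Th. (T1 \<inter> T2) face_of T1 \<and> (T1 \<inter> T2) face_of T2)"

definition mesh_nodes :: "(real^'n) set set \<Rightarrow> (real^'n) set" where
  "mesh_nodes Th = (\<Union>T\<in>Th. {x. x extreme_point_of T})"

definition interior_nodes :: "(real^'n) set set \<Rightarrow> (real^'n) set \<Rightarrow> (real^'n) set" where
  "interior_nodes Th \<Omega> = mesh_nodes Th - frontier \<Omega>"

definition Vh :: "(real^'n) set set \<Rightarrow> (real^'n) set \<Rightarrow> (real^'n \<Rightarrow> real) set" where
  "Vh Th \<Omega> = {v. continuous_on UNIV v \<and>
      (\<forall>T\<in>Th. \<exists>a b. \<forall>x\<in>T. v x = a \<bullet> x + b) \<and>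
      (\<forall>x. x \<notin> \<Omega> \<longrightarrow> v x = 0)}"

definition hwz_symmetric :: "real^'n \<Rightarrow> (real^'n) set \<Rightarrow> bool" where
  "hwz_symmetric x D \<longleftrightarrow>
     (\<forall>z j. x + z \<in> D \<longleftrightarrow> x + (\<chi> k. if k = j then - z $ k else z $ k) \<in> D) \<and>
     (\<forall>z i j. x + z \<in> D \<longleftrightarrow> x + (\<chi> k. z $ (Transposition.transpose i j k)) \<in> D)"

definition admissible_region :: "(real^'n) set \<Rightarrow> real^'n \<Rightarrow> real \<Rightarrow> (real^'n) set \<Rightarrow> bool" where
  "admissible_region \<Omega> x H D \<longleftrightarrow> open D \<and> connected D \<and> x \<in> D \<and>
     (\<forall>y\<in>D. closed_segment x y \<subseteq> D) \<and> D \<subseteq> \<Omega> \<and>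
     (\<forall>j. x + H *\<^sub>R axis j 1 \<in> D \<and> x - H *\<^sub>R axis j 1 \<in> D) \<and> hwz_symmetric x D"

definition Delta_FD :: "(real^'n \<Rightarrow> real) \<Rightarrow> real^'n \<Rightarrow> real \<Rightarrow> real" where
  "Delta_FD v x H = (\<Sum>j\<in>UNIV. v (x + H *\<^sub>R axis j 1) - 2 * v x + v (x - H *\<^sub>R axis j 1))"

text \<open>Discrete fractional Laplacian at node x (Han--Wu--Zhou monotone scheme).\<close>
definition frac_lap_h :: "real \<Rightarrow> real \<Rightarrow> real \<Rightarrow> (real^'n) set \<Rightarrow> (real^'n \<Rightarrow> real) \<Rightarrow> real^'n \<Rightarrow> real" where
  "frac_lap_h s \<kappa> H D v x =
     - \<kappa> * Delta_FD v x H / H powr (2 * s)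
     + (LINT y : (- D) | lborel. (v x - v y) / norm (x - y) powr (real CARD('n) + 2 * s))"

end

theory Submission
  imports Defs
begin

lemma single_le_suminf_ennreal: "(f i::ennreal) \<le> (\<Sum>k. f k)"
  by (metis ennreal_suminf_lessD not_le order.irrefl)

lemma dyadic_point:
  fixes d r :: real
  assumes "r > 0" "r \<le> d"
  shows "\<exists>k::nat. 2^k * r \<le> d \<and> d < 2^(Suc k) * r"
proof -
  define l where "l = log 2 (d / r)"
  have dr: "d / r \<ge> 1" using assms by simp
  have l0: "l \<ge> 0" unfolding l_def using dr by simp
  define k where "k = nat \<lfloor>l\<rfloor>"
  have kl: "real k = of_int \<lfloor>l\<rfloor>" unfolding k_def using l0 by simp
  have "real k \<le> l" using kl by linarith
  hence "2 powr real k \<le> 2 powr l" by simp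
  also have "2 powr l = d / r" unfolding l_def using dr by simp
  finally have a: "2^k \<le> d / r" by (simp add: powr_realpow)
  have "l < real k + 1" using kl by linarith
  hence "2 powr l < 2 powr (real k + 1)" by simp
  hence b: "d / r < 2^(Suc k)" unfolding l_def using dr by (simp add: powr_realpow powr_add)
  show ?thesis using a b assms by (intro exI[of _ k]) (simp add: field_simps)
qed

lemma kernel_nn_finite:
  fixes c :: "'a::euclidean_space" and r q :: real
  assumes r: "r > 0" and q: "q > 0"
  shows "(\<integral>\<^sup>+y. ennreal (indicator {y. r \<le> norm (c - y)} y * norm (c - y) powr (- (real DIM('a) + q))) \<partial>lborel) < \<infinity>"
proof -
  define p where "p = real DIM('a) + q"
  define a where "a k = (2^k * r) powr (- p)" for k :: nat
  define B where "B k = ball c (2^(Suc k) * r)" for k :: nat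
  define V where "V = unit_ball_vol (real DIM('a))"
  have V0: "V \<ge> 0" unfolding V_def by (simp add: unit_ball_vol_def)
  have pt: "ennreal (indicator {y. r \<le> norm (c - y)} y * norm (c - y) powr (- p))
        \<le> (\<Sum>k. ennreal (a k) * indicator (B k) y)" for y
  proof (cases "r \<le> norm (c - y)")
    case False thus ?thesis by simp
  next
    case True
    then obtain k where k: "2^k * r \<le> norm (c - y)" "norm (c - y) < 2^(Suc k) * r"
      using dyadic_point[OF r] by blast
    have "norm (c - y) powr (- p) \<le> a k" unfolding a_def
      using k r q by (intro powr_mono2') (auto simp: p_def)
    moreover have "y \<in> B k" using k by (simp add: B_def dist_norm)
    ultimately have "ennreal (indicator {y. r \<le> norm (c - y)} y * norm (c - y) powr (- p))
        \<le> ennreal (a k) * indicator (B k) y" using True by (simp add: ennreal_leI)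
    also have "\<dots> \<le> (\<Sum>k. ennreal (a k) * indicator (B k) y)" by (rule single_le_suminf_ennreal)
    finally show ?thesis .
  qed
  define x where "x = (2::real) powr (- q)"
  have x0: "0 \<le> x" "x < 1" unfolding x_def using q powr_less_mono[of "-q" 0 2] by auto
  have termk: "a k * (V * (2^(Suc k) * r) ^ DIM('a)) = (V * 2^DIM('a) * r powr (- q)) * x^k" for k
  proof -
    have pos: "2^k * r > 0" using r by simp
    have "a k = (2^k*r) powr (- real DIM('a)) * (2^k*r) powr (-q)"
      unfolding a_def p_def by (simp add: powr_add[symmetric])
    moreover have "(2^k*r) powr (- real DIM('a)) * (2^k*r)^DIM('a) = 1"
      using pos r by (simp add: powr_minus powr_realpow divide_simps)
    moreover have "(2^k*r) powr (-q) = x^k * r powr (-q)"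
      using r by (simp add: x_def powr_mult powr_realpow[symmetric] powr_powr mult.commute powr_power)
    moreover have "(2^(Suc k) * r) ^ DIM('a) = 2^DIM('a) * (2^k*r)^DIM('a)"
      by (simp add: power_mult_distrib)
    ultimately show ?thesis
      by (metis (no_types, lifting) mult.commute mult.left_commute mult_1)
  qed
  have "(\<integral>\<^sup>+y. ennreal (indicator {y. r \<le> norm (c - y)} y * norm (c - y) powr (- p)) \<partial>lborel)
     \<le> (\<integral>\<^sup>+y. (\<Sum>k. ennreal (a k) * indicator (B k) y) \<partial>lborel)"
    by (intro nn_integral_mono pt)
  also have "\<dots> = (\<Sum>k. \<integral>\<^sup>+y. ennreal (a k) * indicator (B k) y \<partial>lborel)"
    by (rule nn_integral_suminf) (auto simp: B_def intro!: borel_measurable_indicator measurable_compose[OF _ borel_measurable_times_ennreal] borel_measurable_times_ennreal)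
  also have "\<dots> = (\<Sum>k. ennreal (a k * (V * (2^(Suc k) * r) ^ DIM('a))))"
    using r V0 by (simp add: nn_integral_cmult_indicator B_def emeasure_ball V_def a_def ennreal_mult)
  also have "\<dots> = (\<Sum>k. ennreal ((V * 2^DIM('a) * r powr (- q)) * x^k))"
    by (simp only: termk)
  also have "\<dots> < \<infinity>"
  proof -
    have "summable (\<lambda>k. (V * 2^DIM('a) * r powr (- q)) * x^k)"
      using x0 by (intro summable_mult summable_geometric) simp
    thus ?thesis using x0 V0 by (simp add: ennreal_suminf_neq_top less_top)
  qed
  finally show ?thesis by (simp add: p_def)
qed

lemma kernel_integrable:
  fixes c :: "'a::euclidean_space" and r q :: real
  assumes r: "r > 0" and q: "q > 0"
  shows "integrable lborel (\<lambda>y. indicator {y. r \<le> norm (c - y)} y * norm (c - y) powr (- (real DIM('a) + q)))"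
proof (rule integrableI_nonneg)
  show "(\<lambda>y. indicator {y. r \<le> norm (c - y)} y * norm (c - y) powr (- (real DIM('a) + q))) \<in> borel_measurable lborel"
    by measurable
  show "AE y in lborel. 0 \<le> indicator {y. r \<le> norm (c - y)} y * norm (c - y) powr (- (real DIM('a) + q))"
    by (simp add: indicator_def)
  show "(\<integral>\<^sup>+y. ennreal (indicator {y. r \<le> norm (c - y)} y * norm (c - y) powr (- (real DIM('a) + q))) \<partial>lborel) < \<infinity>"
    by (rule kernel_nn_finite[OF r q])
qed

lemma frac_int:
  fixes g :: "real^'n \<Rightarrow> real"
  assumes cont: "continuous_on UNIV g" and bd: "\<And>y. \<bar>g y\<bar> \<le> Bd" and D: "open D" "x \<in> D"
    and s: "s > 0"
  shows "set_integrable lborel (- D) (\<lambda>y. (g x - g y) / norm (x - y) powr (real CARD('n) + 2 * s))"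
proof -
  obtain r where r: "r > 0" "ball x r \<subseteq> D" using D openE by blast
  define K where "K y = indicator {y. r \<le> norm (x - y)} y * norm (x - y) powr (- (real CARD('n) + 2 * s))" for y
  have K: "integrable lborel K" unfolding K_def using kernel_integrable[OF r(1), of "2 * s" x] s by simp
  have Bd0: "Bd \<ge> 0" using bd[of x] by linarith
  have gm: "g \<in> borel_measurable borel" using cont by (rule borel_measurable_continuous_onI)
  have gm2: "g \<in> borel_measurable lborel" using gm by simp
  have Dm: "-D \<in> sets lborel" using D by (simp add: closed_Compl)
  have i1: "integrable lborel (\<lambda>y. 2 * Bd * K y)" using K by simp
  have i2: "(\<lambda>y. indicator (- D) y *\<^sub>R ((g x - g y) / norm (x - y) powr (real CARD('n) + 2 * s))) \<in> borel_measurable lborel"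
      using gm2 Dm by measurable
  have i3: "AE y in lborel. norm (indicator (- D) y *\<^sub>R ((g x - g y) / norm (x - y) powr (real CARD('n) + 2 * s))) \<le> norm (2 * Bd * K y)"
    proof (rule AE_I2)
      fix y
      show "norm (indicator (- D) y *\<^sub>R ((g x - g y) / norm (x - y) powr (real CARD('n) + 2 * s))) \<le> norm (2 * Bd * K y)"
      proof (cases "y \<in> D")
        case True thus ?thesis by simp
      next
        case False
        hence "y \<notin> ball x r" using r by blast
        hence ny: "r \<le> norm (x - y)" by (simp add: dist_norm)
        hence npos: "norm (x - y) > 0" using r by linarith
        have gb: "\<bar>g x - g y\<bar> \<le> 2 * Bd" using bd[of x] bd[of y] by linarith
        have "\<bar>(g x - g y) / norm (x - y) powr (real CARD('n) + 2 * s)\<bar>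
            = \<bar>g x - g y\<bar> * norm (x - y) powr (- (real CARD('n) + 2 * s))"
          using npos by (subst powr_minus) (simp add: abs_divide divide_inverse abs_mult)
        also have "\<dots> \<le> 2 * Bd * norm (x - y) powr (- (real CARD('n) + 2 * s))"
          by (intro mult_right_mono gb) simp
        finally show ?thesis using False ny Bd0 by (simp add: K_def)
      qed
    qed
  show ?thesis unfolding set_integrable_def
    using Bochner_Integration.integrable_bound[OF i1 i2 i3] .
qed

lemma vh_bounded:
  fixes g :: "real^'n \<Rightarrow> real"
  assumes "continuous_on UNIV g" "bounded \<Omega>" "\<And>x. x \<notin> \<Omega> \<Longrightarrow> g x = 0"
  shows "\<exists>Bd. \<forall>y. \<bar>g y\<bar> \<le> Bd"
proof -
  have "compact (g ` closure \<Omega>)"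
    using assms by (intro compact_continuous_image continuous_on_subset[OF assms(1)]) auto
  then obtain B where B: "\<forall>z\<in>g ` closure \<Omega>. norm z \<le> B"
    using compact_imp_bounded bounded_iff by metis
  have "\<bar>g y\<bar> \<le> max B 0" for y
  proof (cases "y \<in> \<Omega>")
    case True thus ?thesis using B closure_subset by fastforce
  next
    case False thus ?thesis using assms(3) by simp
  qed
  thus ?thesis by blast
qed

lemma affine_max_vertex:
  fixes a :: "'a::euclidean_space"
  assumes "finite C" "p \<in> convex hull C"
  shows "\<exists>c\<in>C. a \<bullet> p + b \<le> a \<bullet> c + b"
proof -
  have Cne: "C \<noteq> {}" using assms(2) by auto
  define m where "m = Max ((\<lambda>c. a \<bullet> c) ` C)"
  have "C \<subseteq> {y. a \<bullet> y \<le> m}" unfolding m_def using assms(1) by auto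
  hence "convex hull C \<subseteq> {y. a \<bullet> y \<le> m}"
    by (intro hull_minimal convex_halfspace_le) auto
  hence "a \<bullet> p \<le> m" using assms(2) by auto
  moreover have "m \<in> (\<lambda>c. a \<bullet> c) ` C" unfolding m_def using assms(1) Cne by (intro Max_in) auto
  ultimately show ?thesis by auto
qed

theorem lemma3p4:
  fixes \<Omega> :: "(real^'n) set"
    and Th :: "(real^'n) set set"
    and s :: real
    and H \<kappa> :: "real^'n \<Rightarrow> real"
    and \<Omega>i :: "real^'n \<Rightarrow> (real^'n) set"
    and \<Lambda> :: "(real^'n) set"
    and v w :: "real^'n \<Rightarrow> real"
  assumes "0 < s" "s < 1"
    and "lipschitz_domain \<Omega>"
    and "exterior_ball_condition \<Omega>"
    and "conforming_triangulation Th \<Omega>"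
    and "\<And>x. x \<in> interior_nodes Th \<Omega> \<Longrightarrow> H x > 0"
    and "\<And>x. x \<in> interior_nodes Th \<Omega> \<Longrightarrow> \<kappa> x > 0"
    and "\<And>x. x \<in> interior_nodes Th \<Omega> \<Longrightarrow> admissible_region \<Omega> x (H x) (\<Omega>i x)"
    and "\<Lambda> \<subseteq> interior_nodes Th \<Omega>"
    and "v \<in> Vh Th \<Omega>" "w \<in> Vh Th \<Omega>"
    and "\<And>x. x \<in> \<Lambda> \<Longrightarrow>
           frac_lap_h s (\<kappa> x) (H x) (\<Omega>i x) v x \<ge> frac_lap_h s (\<kappa> x) (H x) (\<Omega>i x) w x"
    and "\<And>x. x \<in> interior_nodes Th \<Omega> - \<Lambda> \<Longrightarrow> v x \<ge> w x"
  shows "\<forall>x\<in>\<Omega>. v x \<ge> w x"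
proof (rule ccontr)
  note A = assms
  assume "\<not> (\<forall>x\<in>\<Omega>. w x \<le> v x)"
  then obtain x0 where x0: "x0 \<in> \<Omega>" "v x0 < w x0" by force
  define u where "u y = w y - v y" for y
  have ld: "open \<Omega>" "bounded \<Omega>" using A(3) unfolding lipschitz_domain_def by auto
  have vc: "continuous_on UNIV v" and v0: "\<And>x. x \<notin> \<Omega> \<Longrightarrow> v x = 0"
    and vaff: "\<forall>T\<in>Th. \<exists>a b. \<forall>x\<in>T. v x = a \<bullet> x + b" using A(10) unfolding Vh_def by auto
  have wc: "continuous_on UNIV w" and w0: "\<And>x. x \<notin> \<Omega> \<Longrightarrow> w x = 0"
    and waff: "\<forall>T\<in>Th. \<exists>a b. \<forall>x\<in>T. w x = a \<bullet> x + b" using A(11) unfolding Vh_def by auto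
  have uc: "continuous_on UNIV u" unfolding u_def using vc wc by (intro continuous_intros)
  have u0: "\<And>x. x \<notin> \<Omega> \<Longrightarrow> u x = 0" unfolding u_def using v0 w0 by simp
  have cpt: "compact (closure \<Omega>)" using ld by (simp add: compact_closure)
  have ne: "closure \<Omega> \<noteq> {}" using x0 closure_subset by auto
  obtain p where p: "p \<in> closure \<Omega>" "\<And>y. y \<in> closure \<Omega> \<Longrightarrow> u y \<le> u p"
    using continuous_attains_sup[OF cpt ne continuous_on_subset[OF uc]] by blast
  define M where "M = u p"
  have Mpos: "M > 0" using p(2)[of x0] x0 closure_subset unfolding M_def u_def by force
  have uM: "u y \<le> M" for y
  proof (cases "y \<in> closure \<Omega>")
    case True thus ?thesis using p M_def by simp
  next
    case False hence "y \<notin> \<Omega>" using closure_subset by blast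
    thus ?thesis using u0 Mpos by simp
  qed
  have tri: "finite Th" "\<forall>T\<in>Th. (int CARD('n)) simplex T" "\<Union>Th = closure \<Omega>"
    using A(5) unfolding conforming_triangulation_def by auto
  obtain T where T: "T \<in> Th" "p \<in> T" using tri(3) p(1) by blast
  obtain C where C: "\<not> affine_dependent C" "T = convex hull C"
    using tri(2) T(1) unfolding simplex_def by blast
  have fC: "finite C" using C(1) aff_independent_finite by blast
  obtain av bv where av: "\<forall>x\<in>T. v x = av \<bullet> x + bv" using vaff T(1) by blast
  obtain aw bw where aw: "\<forall>x\<in>T. w x = aw \<bullet> x + bw" using waff T(1) by blast
  have uT: "\<forall>x\<in>T. u x = (aw - av) \<bullet> x + (bw - bv)"
    using av aw unfolding u_def by (simp add: inner_diff_left)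
  obtain c where c: "c \<in> C" "(aw - av) \<bullet> p + (bw - bv) \<le> (aw - av) \<bullet> c + (bw - bv)"
    using affine_max_vertex[OF fC, of p "aw - av" "bw - bv"] T(2) C(2) by blast
  have cT: "c \<in> T" by (simp add: C(2) c(1) hull_inc)
  have ucM: "u c = M"
  proof -
    have e1: "u c = (aw - av) \<bullet> c + (bw - bv)" using uT cT by blast
    have e2: "u p = (aw - av) \<bullet> p + (bw - bv)" using uT T(2) by blast
    have "u c \<ge> M" using c(2) e1 e2 unfolding M_def by linarith
    moreover have "u c \<le> M" by (rule uM)
    ultimately show ?thesis by simp
  qed
  have cext: "c extreme_point_of T" using C extreme_point_of_convex_hull_affine_independent c(1) by blast
  have cmesh: "c \<in> mesh_nodes Th" unfolding mesh_nodes_def using cext T(1) by blast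
  have cOm: "c \<in> \<Omega>" using ucM Mpos u0 by force
  have cfr: "c \<notin> frontier \<Omega>" using cOm ld(1) by (simp add: frontier_def interior_open)
  have cint: "c \<in> interior_nodes Th \<Omega>" unfolding interior_nodes_def using cmesh cfr by blast
  have cL: "c \<in> \<Lambda>"
  proof (rule ccontr)
    assume "c \<notin> \<Lambda>"
    hence "v c \<ge> w c" using A(13) cint by blast
    thus False using ucM Mpos unfolding u_def by simp
  qed
  define D where "D = \<Omega>i c"
  define h where "h = H c"
  define k where "k = \<kappa> c"
  define P where "P = real CARD('n) + 2 * s"
  have adm: "admissible_region \<Omega> c h D" using A(8)[OF cint] unfolding D_def h_def by simp
  have Dp: "open D" "c \<in> D" "D \<subseteq> \<Omega>" using adm unfolding admissible_region_def by auto
  have hpos: "h > 0" using A(6)[OF cint] h_def by simp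
  have kpos: "k > 0" using A(7)[OF cint] k_def by simp
  have ineq: "frac_lap_h s k h D v c \<ge> frac_lap_h s k h D w c" using A(12)[OF cL] unfolding D_def h_def k_def .
  obtain Bv where Bv: "\<And>y. \<bar>v y\<bar> \<le> Bv" using vh_bounded[OF vc ld(2) v0] by blast
  obtain Bw where Bw: "\<And>y. \<bar>w y\<bar> \<le> Bw" using vh_bounded[OF wc ld(2) w0] by blast
  have iv: "set_integrable lborel (-D) (\<lambda>y. (v c - v y) / norm (c - y) powr P)"
    unfolding P_def by (rule frac_int[OF vc Bv Dp(1,2) A(1)])
  have iw: "set_integrable lborel (-D) (\<lambda>y. (w c - w y) / norm (c - y) powr P)"
    unfolding P_def by (rule frac_int[OF wc Bw Dp(1,2) A(1)])
  define F where "F y = (w c - w y) / norm (c - y) powr P - (v c - v y) / norm (c - y) powr P" for y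
  have Feq: "F y = (M - u y) / norm (c - y) powr P" for y
    unfolding F_def ucM[symmetric] u_def by (simp add: diff_divide_distrib)
  have iF: "set_integrable lborel (-D) F" unfolding F_def using iw iv by (rule set_integral_diff)
  have LF: "(LINT y:-D|lborel. F y) = (LINT y:-D|lborel. (w c - w y) / norm (c - y) powr P)
         - (LINT y:-D|lborel. (v c - v y) / norm (c - y) powr P)"
    unfolding F_def using iw iv by (rule set_integral_diff)
  have FDu: "Delta_FD w c h - Delta_FD v c h = Delta_FD u c h"
    unfolding Delta_FD_def u_def by (simp only: sum_subtractf[symmetric]) (simp add: algebra_simps)
  have FDle: "Delta_FD u c h \<le> 0"
  proof -
    have "u (c + h *\<^sub>R axis j 1) - 2 * u c + u (c - h *\<^sub>R axis j 1) \<le> 0" for j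
      using uM[of "c + h *\<^sub>R axis j 1"] uM[of "c - h *\<^sub>R axis j 1"] ucM by linarith
    thus ?thesis unfolding Delta_FD_def by (intro sum_nonpos) 
  qed
  have part1: "- k * Delta_FD u c h / h powr (2 * s) \<ge> 0"
    using kpos hpos FDle by (intro divide_nonneg_pos) (auto simp: mult_nonpos_nonpos mult_pos_neg mult_nonneg_nonpos)
  obtain R where R: "R > 0" "\<Omega> \<subseteq> ball 0 R" using bounded_subset_ballD[OF ld(2)] by blast
  obtain q :: "real^'n" where q: "norm q = R + 1" using vector_choose_size[of "R + 1"] R by auto
  define B where "B = ball q 1"
  define L where "L = norm c + R + 2"
  define m where "m = M / L powr P"
  have Lpos: "L > 0" unfolding L_def using R(1) norm_ge_zero[of c] by linarith
  have mpos: "m > 0" unfolding m_def using Mpos Lpos by simp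
  have Bout: "y \<in> B \<Longrightarrow> y \<notin> \<Omega>" for y
  proof -
    assume "y \<in> B"
    hence "norm (q - y) < 1" unfolding B_def by (simp add: dist_norm)
    hence "norm y > R" using q norm_triangle_ineq2[of q y] by linarith
    thus "y \<notin> \<Omega>" using R by (auto simp: dist_norm)
  qed
  have FB: "y \<in> B \<Longrightarrow> F y \<ge> m" for y
  proof -
    assume yB: "y \<in> B"
    have y\<Omega>: "y \<notin> \<Omega>" using Bout yB .
    have ncy: "norm (c - y) > 0" using y\<Omega> cOm by auto
    have "norm (q - y) < 1" using yB unfolding B_def by (simp add: dist_norm)
    hence "norm y \<le> R + 2" using q norm_triangle_ineq2[of y q] norm_minus_commute[of q y] by linarith
    hence "norm (c - y) \<le> L" unfolding L_def using norm_triangle_ineq4[of c y] by linarith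
    hence "norm (c - y) powr P \<le> L powr P" using ncy by (intro powr_mono2) (auto simp: P_def A(1) less_imp_le)
    hence "M / L powr P \<le> M / norm (c - y) powr P" using ncy Mpos Lpos
      by (intro divide_left_mono) auto
    thus "F y \<ge> m" unfolding Feq m_def using u0[OF y\<Omega>] by simp
  qed
  have Fnn: "y \<notin> D \<Longrightarrow> F y \<ge> 0" for y
    unfolding Feq using uM[of y] by simp
  have Bsets: "B \<in> sets lborel" unfolding B_def by simp
  have Bfin: "emeasure lborel B < \<infinity>" unfolding B_def by (simp add: emeasure_ball)
  have "m * measure lborel B = integral\<^sup>L lborel (\<lambda>y. m * indicator B y)"
    by simp
  also have "\<dots> \<le> integral\<^sup>L lborel (\<lambda>y. indicator (-D) y *\<^sub>R F y)"
  proof (rule integral_mono)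
    show "integrable lborel (\<lambda>y. m * indicator B y)" using Bsets Bfin by simp
    show "integrable lborel (\<lambda>y. indicator (-D) y *\<^sub>R F y)" using iF unfolding set_integrable_def .
    fix y
    show "m * indicator B y \<le> indicator (-D) y *\<^sub>R F y"
    proof (cases "y \<in> B")
      case True
      hence "y \<notin> D" using Bout Dp(3) by blast
      thus ?thesis using True FB[OF True] by simp
    next
      case False
      thus ?thesis using Fnn by (simp add: indicator_def)
    qed
  qed
  finally have "m * measure lborel B \<le> (LINT y:-D|lborel. F y)"
    unfolding set_lebesgue_integral_def .
  moreover have "measure lborel B > 0" unfolding B_def using content_ball_gt_0_iff by simp
  ultimately have part2: "(LINT y:-D|lborel. F y) > 0" using mpos
    by (meson less_le_trans mult_pos_pos)
  have "frac_lap_h s k h D w c - frac_lap_h s k h D v c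
      = - k * Delta_FD u c h / h powr (2 * s) + (LINT y:-D|lborel. F y)"
  proof -
    have "frac_lap_h s k h D w c - frac_lap_h s k h D v c
      = - k * (Delta_FD w c h - Delta_FD v c h) / h powr (2 * s)
        + ((LINT y:-D|lborel. (w c - w y) / norm (c - y) powr P) - (LINT y:-D|lborel. (v c - v y) / norm (c - y) powr P))"
      unfolding frac_lap_h_def P_def by (simp add: right_diff_distrib diff_divide_distrib)
    thus ?thesis unfolding FDu LF .
  qed
  also have "\<dots> > 0" using part1 part2 by simp
  finally show False using ineq by simp
qed

end
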